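(* In $\mathcal{V}$, for all $p,q\in P$: $p\preccurlyeq q$ if and only if $|S_p|\leqslant|S_q|$, and $p\preccurlyeq^\ast q$ if and only if $|S_p|\leqslant^\ast|S_q|$.
   Context: Work in $\mathsf{ZFA}$ (set theory with atoms) over a ground model of $\mathsf{ZFC}$ containing a doubly ordered set $\langle P,\preccurlyeq,\preccurlyeq^\ast\rangle$ (i.e. $\preccurlyeq$ a partial order on $P$, $\preccurlyeq^\ast$ a preorder on $P$, and $p\preccurlyeq q\Rightarrow p\preccurlyeq^\ast q$). Write $p\prec q$ for ($p\preccurlyeq q$ and $p\neq q$). For a quadruple $\langle x_0,x_1,x_2,x_3\rangle$ and $i<4$, $\mathrm{pr}_i(\langle x_0,x_1,x_2,x_3\rangle)=x_i$. For a set $S$, $\mathscr{S}(S)$ is the set of permutations of $S$. Define recursively $A_0=\{\langle0,p,\varnothing,k\rangle\mid p\in P,k\in\omega\}$ and $A_{n+1}=A_n\cup\{\langle n+1,q,a,0\rangle\mid q\in P,a\in A_n,\mathrm{pr}_1(a)\prec q\}\cup\{\langle n+1,q,a,k\rangle\mid q\in P,a\in A_n,\mathrm{pr}_1(a)\not\preccurlyeq q,\mathrm{pr}_1(a)\preccurlyeq^\ast q,k\in\omega\}$; let $A=\bigcup_{n}A_n$, whose elements serve as the atoms. Define groups $\mathcal{G}_n\subseteq\mathscr{S}(A_n)$: $\mathcal{G}_0=\{f\in\mathscr{S}(A_0)\mid \mathrm{pr}_1(f(a))=\mathrm{pr}_1(a)\text{ for all }a\in A_0\}$; for $f\in\mathscr{S}(A_{n+1})$,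 $f\in\mathcal{G}_{n+1}$ iff $f{\upharpoonright}A_n\in\mathcal{G}_n$ and for all $b\in A_{n+1}\setminus A_n$, $\mathrm{pr}_1(f(b))=\mathrm{pr}_1(b)$ and $\mathrm{pr}_2(f(b))=f(\mathrm{pr}_2(b))$. Let $\mathcal{G}=\{\pi\in\mathscr{S}(A)\mid \pi{\upharpoonright}A_n\in\mathcal{G}_n\text{ for all }n\}$. $\mathcal{V}$ is the permutation model determined by $\mathcal{G}$ and finite supports: $x\in\mathcal{V}$ iff $x\subseteq\mathcal{V}$ and there is a finite $B\subseteq A$ (a support of $x$) such that every $\pi\in\mathcal{G}$ fixing $B$ pointwise fixes $x$. For $p\in P$, $S_p=\{a\in A\mid \mathrm{pr}_1(a)=p\}$. For sets $X,Y$, $|X|\leqslant|Y|$ means there is an injection from $X$ into $Y$, and $|X|\leqslant^\ast|Y|$ means there is a surjection from a subset of $Y$ onto $X$ (both computed in $\mathcal{V}$). *)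

theory Defs
  imports Main
begin

text \<open>Atoms: quadruples (level, element of P, predecessor atom or empty set, natural number).
  The empty set in the third coordinate is represented by None.\<close>
datatype 'p atom = At nat 'p "'p atom option" nat

fun pr0 :: "'p atom \<Rightarrow> nat" where "pr0 (At n p a k) = n"
fun pr1 :: "'p atom \<Rightarrow> 'p" where "pr1 (At n p a k) = p"
fun pr2 :: "'p atom \<Rightarrow> 'p atom option" where "pr2 (At n p a k) = a"
fun pr3 :: "'p atom \<Rightarrow> nat" where "pr3 (At n p a k) = k"

primrec Alev :: "'p set \<Rightarrow> ('p \<Rightarrow> 'p \<Rightarrow> bool) \<Rightarrow> ('p \<Rightarrow> 'p \<Rightarrow> bool) \<Rightarrow> nat \<Rightarrow> 'p atom set" where
  "Alev P le les 0 = {At 0 p None k | p k. p \<in> P}"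
| "Alev P le les (Suc n) = Alev P le les n
     \<union> {At (Suc n) q (Some a) 0 | q a. q \<in> P \<and> a \<in> Alev P le les n
            \<and> le (pr1 a) q \<and> pr1 a \<noteq> q}
     \<union> {At (Suc n) q (Some a) k | q a k. q \<in> P \<and> a \<in> Alev P le les n
            \<and> \<not> le (pr1 a) q \<and> les (pr1 a) q}"

definition Aall :: "'p set \<Rightarrow> ('p \<Rightarrow> 'p \<Rightarrow> bool) \<Rightarrow> ('p \<Rightarrow> 'p \<Rightarrow> bool) \<Rightarrow> 'p atom set" where
  "Aall P le les = (\<Union>n. Alev P le les n)"

text \<open>The groups G_n (a function f belongs to Glev n iff its restriction to A_n is in G_n).\<close>
primrec Glev :: "'p set \<Rightarrow> ('p \<Rightarrow> 'p \<Rightarrow> bool) \<Rightarrow> ('p \<Rightarrow> 'p \<Rightarrow> bool) \<Rightarrow> nat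
                 \<Rightarrow> ('p atom \<Rightarrow> 'p atom) set" where
  "Glev P le les 0 = {f. bij_betw f (Alev P le les 0) (Alev P le les 0)
      \<and> (\<forall>a \<in> Alev P le les 0. pr1 (f a) = pr1 a)}"
| "Glev P le les (Suc n) = {f. bij_betw f (Alev P le les (Suc n)) (Alev P le les (Suc n))
      \<and> f \<in> Glev P le les n
      \<and> (\<forall>b \<in> Alev P le les (Suc n) - Alev P le les n.
            pr1 (f b) = pr1 b \<and> pr2 (f b) = map_option f (pr2 b))}"

text \<open>The group G of permutations of A (only the values on A matter).\<close>
definition Gperm :: "'p set \<Rightarrow> ('p \<Rightarrow> 'p \<Rightarrow> bool) \<Rightarrow> ('p \<Rightarrow> 'p \<Rightarrow> bool) \<Rightarrow> ('p atom \<Rightarrow> 'p atom) set" where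
  "Gperm P le les = {\<pi>. bij_betw \<pi> (Aall P le les) (Aall P le les) \<and> (\<forall>n. \<pi> \<in> Glev P le les n)}"

definition in_V_rel :: "'p set \<Rightarrow> ('p \<Rightarrow> 'p \<Rightarrow> bool) \<Rightarrow> ('p \<Rightarrow> 'p \<Rightarrow> bool)
                         \<Rightarrow> ('p atom \<times> 'p atom) set \<Rightarrow> bool" where
  "in_V_rel P le les R \<longleftrightarrow> (\<exists>B. finite B \<and> B \<subseteq> Aall P le les \<and>
     (\<forall>\<pi> \<in> Gperm P le les. (\<forall>b \<in> B. \<pi> b = b) \<longrightarrow> (\<lambda>(x, y). (\<pi> x, \<pi> y)) ` R = R))"

definition Sset :: "'p set \<Rightarrow> ('p \<Rightarrow> 'p \<Rightarrow> bool) \<Rightarrow> ('p \<Rightarrow> 'p \<Rightarrow> bool) \<Rightarrow> 'p \<Rightarrow> 'p atom set" where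
  "Sset P le les p = {a \<in> Aall P le les. pr1 a = p}"

text \<open>|S_p| \<le> |S_q| in V: an injection S_p \<rightarrow> S_q lying in V.\<close>
definition V_le :: "'p set \<Rightarrow> ('p \<Rightarrow> 'p \<Rightarrow> bool) \<Rightarrow> ('p \<Rightarrow> 'p \<Rightarrow> bool) \<Rightarrow> 'p \<Rightarrow> 'p \<Rightarrow> bool" where
  "V_le P le les p q \<longleftrightarrow> (\<exists>f. inj_on f (Sset P le les p) \<and> f ` Sset P le les p \<subseteq> Sset P le les q
       \<and> in_V_rel P le les {(x, f x) | x. x \<in> Sset P le les p})"

text \<open>|S_p| \<le>* |S_q| in V: a surjection from a subset of S_q onto S_p lying in V.\<close>
definition V_le_star :: "'p set \<Rightarrow> ('p \<Rightarrow> 'p \<Rightarrow> bool) \<Rightarrow> ('p \<Rightarrow> 'p \<Rightarrow> bool) \<Rightarrow> 'p \<Rightarrow> 'p \<Rightarrow> bool" where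
  "V_le_star P le les p q \<longleftrightarrow> (\<exists>D g. D \<subseteq> Sset P le les q \<and> g ` D = Sset P le les p
       \<and> in_V_rel P le les {(y, g y) | y. y \<in> D})"

end

theory Submission
  imports Defs
begin



lemma atom_eta: "x = At (pr0 x) (pr1 x) (pr2 x) (pr3 x)"
  by (cases x) auto

definition cnd :: "('p \<Rightarrow> 'p \<Rightarrow> bool) \<Rightarrow> ('p \<Rightarrow> 'p \<Rightarrow> bool) \<Rightarrow> 'p \<Rightarrow> 'p \<Rightarrow> nat \<Rightarrow> bool" where
  "cnd le les r s j \<longleftrightarrow> (le r s \<and> r \<noteq> s \<and> j = 0) \<or> (\<not> le r s \<and> les r s)"

lemma Alev_At: "At m s oo j \<in> Alev P le les n \<longleftrightarrow> m \<le> n \<and> s \<in> P \<and>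
   (case oo of None \<Rightarrow> m = 0 | Some z \<Rightarrow> 0 < m \<and> z \<in> Alev P le les (m - 1) \<and> cnd le les (pr1 z) s j)"
proof (induction n arbitrary: m s oo j)
  case 0
  then show ?case by (auto split: option.splits)
next
  case (Suc n)
  show ?case
  proof
    assume "At m s oo j \<in> Alev P le les (Suc n)"
    then show "m \<le> Suc n \<and> s \<in> P \<and>
   (case oo of None \<Rightarrow> m = 0 | Some z \<Rightarrow> 0 < m \<and> z \<in> Alev P le les (m - 1) \<and> cnd le les (pr1 z) s j)"
      using Suc.IH[of m s oo j] by (auto simp: cnd_def split: option.splits)
  next
    assume h: "m \<le> Suc n \<and> s \<in> P \<and>
   (case oo of None \<Rightarrow> m = 0 | Some z \<Rightarrow> 0 < m \<and> z \<in> Alev P le les (m - 1) \<and> cnd le les (pr1 z) s j)"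
    show "At m s oo j \<in> Alev P le les (Suc n)"
    proof (cases "m \<le> n")
      case True
      then show ?thesis using h Suc.IH[of m s oo j] by auto
    next
      case False
      then have m: "m = Suc n" using h by auto
      then show ?thesis using h by (auto simp: cnd_def split: option.splits)
    qed
  qed
qed

lemma Alev_pr0: "x \<in> Alev P le les n \<Longrightarrow> pr0 x \<le> n"
  by (cases x) (simp add: Alev_At)

lemma Alev_mono: "m \<le> n \<Longrightarrow> x \<in> Alev P le les m \<Longrightarrow> x \<in> Alev P le les n"
  by (cases x) (auto simp add: Alev_At)

lemma Alev_own: "x \<in> Alev P le les n \<Longrightarrow> x \<in> Alev P le les (pr0 x)"
  by (cases x) (auto simp add: Alev_At)

lemma Aall_iff: "x \<in> Aall P le les \<longleftrightarrow> x \<in> Alev P le les (pr0 x)"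
  unfolding Aall_def using Alev_own by blast

lemma Alev_iff: "x \<in> Alev P le les n \<longleftrightarrow> x \<in> Aall P le les \<and> pr0 x \<le> n"
  using Aall_iff Alev_mono Alev_pr0 unfolding Aall_def by blast

lemma Aall_At: "At m s oo j \<in> Aall P le les \<longleftrightarrow> s \<in> P \<and>
   (case oo of None \<Rightarrow> m = 0 | Some z \<Rightarrow> z \<in> Aall P le les \<and> pr0 z < m \<and> cnd le les (pr1 z) s j)"
  apply (subst Aall_iff)
  apply (simp add: Alev_At split: option.splits)
  apply (auto simp: Alev_iff)
  done



fun depth :: "'p atom \<Rightarrow> nat" where
  "depth (At m s None j) = 0"
| "depth (At m s (Some z) j) = Suc (depth z)"

fun desc :: "'p atom \<Rightarrow> 'p atom \<Rightarrow> bool" where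
  "desc u (At m s None j) = (u = At m s None j)"
| "desc u (At m s (Some z) j) = (u = At m s (Some z) j \<or> desc u z)"

fun root :: "'p atom \<Rightarrow> 'p atom" where
  "root (At m s None j) = At m s None j"
| "root (At m s (Some z) j) = root z"

fun sw :: "'p atom \<Rightarrow> 'p atom \<Rightarrow> 'p atom \<Rightarrow> 'p atom" where
  "sw u v (At m s None j) = (if At m s None j = u then v else if At m s None j = v then u else At m s None j)"
| "sw u v (At m s (Some z) j) = (if At m s (Some z) j = u then v else if At m s (Some z) j = v then u
      else At m s (Some (sw u v z)) j)"

lemma sw_eq: "sw u v x = (if x = u then v else if x = v then u else At (pr0 x) (pr1 x) (map_option (sw u v) (pr2 x)) (pr3 x))"
  by (cases x rule: depth.cases) auto

lemma desc_refl: "desc x x"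
  by (cases x rule: depth.cases) auto

lemma desc_Some: "desc u (At m s (Some z) j) \<longleftrightarrow> u = At m s (Some z) j \<or> desc u z" by simp

lemma desc_trans: "desc a b \<Longrightarrow> desc b c \<Longrightarrow> desc a c"
  by (induction b c rule: desc.induct) auto

lemma desc_depth: "desc a b \<Longrightarrow> depth a \<le> depth b"
  by (induction a b rule: desc.induct) auto

lemma desc_root: "desc x b \<Longrightarrow> pr2 x = None \<Longrightarrow> x = root b"
  by (induction x b rule: desc.induct) auto

lemma depth_pr2: "depth x = (case pr2 x of None \<Rightarrow> 0 | Some z \<Rightarrow> Suc (depth z))"
  by (cases x rule: depth.cases) auto

definition twin :: "'p atom \<Rightarrow> 'p atom \<Rightarrow> bool" where
  "twin u v \<longleftrightarrow> pr0 u = pr0 v \<and> pr1 u = pr1 v \<and> pr2 u = pr2 v \<and> u \<noteq> v"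

lemma sw_shallow: "twin u v \<Longrightarrow> depth x < depth u \<Longrightarrow> sw u v x = x"
proof (induction x)
  case (At m s oo j)
  have dv: "depth v = depth u" using At.prems(1) unfolding twin_def by (simp add: depth_pr2)
  show ?case
  proof (cases oo)
    case None
    then show ?thesis using At.prems dv by auto
  next
    case (Some z)
    then have "sw u v z = z" using At.IH At.prems by auto
    then show ?thesis using At.prems dv Some by auto
  qed
qed

lemma sw_pr: assumes "twin u v"
  shows "pr0 (sw u v x) = pr0 x" "pr1 (sw u v x) = pr1 x" "pr2 (sw u v x) = map_option (sw u v) (pr2 x)"
proof -
  have a: "map_option (sw u v) (pr2 u) = pr2 u"
    using sw_shallow[OF assms] by (cases u rule: depth.cases) auto
  show "pr0 (sw u v x) = pr0 x" "pr1 (sw u v x) = pr1 x" "pr2 (sw u v x) = map_option (sw u v) (pr2 x)"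
    using assms a unfolding twin_def by (subst sw_eq, auto)+
qed

lemma sw_sw: assumes tw: "twin u v" shows "sw u v (sw u v x) = x"
proof (induction x)
  case (At m s oo j)
  have a: "map_option (sw u v) (pr2 u) = pr2 u"
    using sw_shallow[OF tw] by (cases u rule: depth.cases) auto
  have b: "map_option (sw u v) (map_option (sw u v) oo) = oo"
    using At.IH by (cases oo) auto
  have t: "pr2 u = pr2 v" "pr0 u = pr0 v" "pr1 u = pr1 v" "u \<noteq> v" using tw unfolding twin_def by auto
  show ?case
  proof (cases "At m s oo j = u \<or> At m s oo j = v")
    case True
    have swu: "sw u v u = v" by (simp add: sw_eq[of u v u])
    have swv: "sw u v v = u" using t by (simp add: sw_eq[of u v v])
    from True show ?thesis by (elim disjE) (simp_all add: swu swv)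
  next
    case False
    then have e: "sw u v (At m s oo j) = At m s (map_option (sw u v) oo) j" by (simp add: sw_eq[of u v "At m s oo j"])
    have "At m s (map_option (sw u v) oo) j \<noteq> u"
    proof
      assume E: "At m s (map_option (sw u v) oo) j = u"
      have "map_option (sw u v) (map_option (sw u v) oo) = map_option (sw u v) (pr2 u)"
        "m = pr0 u" "s = pr1 u" "j = pr3 u" by (metis E pr0.simps pr1.simps pr2.simps pr3.simps)+
      then have "At m s oo j = u" using a b atom_eta[of u] by simp
      then show False using False by simp
    qed
    moreover have "At m s (map_option (sw u v) oo) j \<noteq> v"
    proof
      assume E: "At m s (map_option (sw u v) oo) j = v"
      have "map_option (sw u v) (map_option (sw u v) oo) = map_option (sw u v) (pr2 v)"
        "m = pr0 v" "s = pr1 v" "j = pr3 v" by (metis E pr0.simps pr1.simps pr2.simps pr3.simps)+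
      then have "At m s oo j = v" using a b t atom_eta[of v] by simp
      then show False using False by simp
    qed
    ultimately show ?thesis using e b by (simp add: sw_eq[of u v "At m s (map_option (sw u v) oo) j"])
  qed
qed

lemma sw_nodesc: "\<not> desc u x \<Longrightarrow> \<not> desc v x \<Longrightarrow> sw u v x = x"
  by (induction u v x rule: sw.induct) auto

lemma sw_desc: "twin u v \<Longrightarrow> desc u x \<Longrightarrow> sw u v x \<noteq> x"
proof (induction u v x rule: sw.induct)
  case (1 u v m s j)
  then show ?case by (auto simp: twin_def)
next
  case (2 u v m s z j)
  then show ?case by (auto simp: twin_def)
qed



lemma Glev_bij: "f \<in> Glev P le les n \<Longrightarrow> bij_betw f (Alev P le les n) (Alev P le les n)"
  by (cases n) auto

lemma Alev0_pr2: "x \<in> Alev P le les 0 \<Longrightarrow> pr2 x = None"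
  by (cases x) (auto simp: Alev_At split: option.splits)

lemma gp_pr: assumes g: "\<pi> \<in> Gperm P le les" and x: "x \<in> Aall P le les"
  shows "pr0 (\<pi> x) = pr0 x \<and> pr1 (\<pi> x) = pr1 x \<and> pr2 (\<pi> x) = map_option \<pi> (pr2 x)"
proof -
  have gl: "\<And>n. \<pi> \<in> Glev P le les n" and bA: "bij_betw \<pi> (Aall P le les) (Aall P le les)"
    using g unfolding Gperm_def by auto
  define n where "n = pr0 x"
  have xn: "x \<in> Alev P le les n" using x Alev_iff n_def by blast
  have pxn: "\<pi> x \<in> Alev P le les n" using Glev_bij[OF gl[of n]] xn by (auto simp: bij_betw_def)
  show ?thesis
  proof (cases n)
    case 0
    then show ?thesis using gl[of 0] xn pxn Alev0_pr2 Alev_pr0 n_def by fastforce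
  next
    case (Suc m)
    have xm: "x \<notin> Alev P le les m" using Alev_pr0 n_def Suc by fastforce
    have "\<pi> x \<notin> Alev P le les m"
    proof
      assume "\<pi> x \<in> Alev P le les m"
      then obtain x' where x': "x' \<in> Alev P le les m" "\<pi> x' = \<pi> x"
        using Glev_bij[OF gl[of m]] by (metis bij_betw_imp_surj_on imageE)
      have "x' \<in> Aall P le les" using x' Alev_iff by blast
      then have "x' = x" using bA x x' by (auto simp: bij_betw_def inj_on_def)
      then show False using x' xm by simp
    qed
    then have "pr0 (\<pi> x) = n" using pxn Alev_iff Suc by (metis Alev_pr0 le_antisym not_less_eq_eq)
    moreover have "pr1 (\<pi> x) = pr1 x \<and> pr2 (\<pi> x) = map_option \<pi> (pr2 x)"
      using gl[of "Suc m"] xn xm Suc by auto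
    ultimately show ?thesis using n_def by simp
  qed
qed

lemma sw_Aall: assumes tw: "twin u v" and u: "u \<in> Aall P le les" and v: "v \<in> Aall P le les"
  shows "x \<in> Aall P le les \<Longrightarrow> sw u v x \<in> Aall P le les"
proof (induction x)
  case (At m s oo j)
  show ?case
  proof (cases "At m s oo j = u \<or> At m s oo j = v")
    case True
    then show ?thesis using u v by (auto simp: sw_eq[of u v "At m s oo j"])
  next
    case False
    then have e: "sw u v (At m s oo j) = At m s (map_option (sw u v) oo) j" by (simp add: sw_eq[of u v "At m s oo j"])
    show ?thesis
    proof (cases oo)
      case None
      then show ?thesis using e At.prems by simp
    next
      case (Some z)
      have "z \<in> Aall P le les" using At.prems Some by (simp add: Aall_At)
      then have "sw u v z \<in> Aall P le les" using At.IH Some by simp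
      then show ?thesis using e At.prems Some sw_pr[OF tw, of z] by (simp add: Aall_At)
    qed
  qed
qed

lemma invol_bij: "(\<And>x. x \<in> S \<Longrightarrow> f x \<in> S) \<Longrightarrow> (\<And>x. f (f x) = x) \<Longrightarrow> bij_betw f S S"
  unfolding bij_betw_def inj_on_def by (metis image_eqI subsetI subset_antisym image_subsetI)

lemma sw_Gperm: assumes tw: "twin u v" and u: "u \<in> Aall P le les" and v: "v \<in> Aall P le les"
  shows "sw u v \<in> Gperm P le les"
proof -
  have A: "\<And>x. x \<in> Aall P le les \<Longrightarrow> sw u v x \<in> Aall P le les" using sw_Aall[OF tw u v] .
  have L: "\<And>x n. x \<in> Alev P le les n \<Longrightarrow> sw u v x \<in> Alev P le les n"
    using A sw_pr(1)[OF tw] Alev_iff by metis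
  have B: "\<And>n. bij_betw (sw u v) (Alev P le les n) (Alev P le les n)"
    using invol_bij[OF L sw_sw[OF tw]] by blast
  have "sw u v \<in> Glev P le les n" for n
  proof (induction n)
    case 0
    have "bij_betw (sw u v) (Alev P le les 0) (Alev P le les 0)" by (rule B)
    then show ?case using sw_pr[OF tw] by (simp only: Glev.simps mem_Collect_eq) blast
  next
    case (Suc n)
    have "bij_betw (sw u v) (Alev P le les (Suc n)) (Alev P le les (Suc n))" by (rule B)
    then show ?case using Suc sw_pr[OF tw] by (simp only: Glev.simps mem_Collect_eq) blast
  qed
  moreover have "bij_betw (sw u v) (Aall P le les) (Aall P le les)"
    using invol_bij[OF A sw_sw[OF tw]] by blast
  ultimately show ?thesis unfolding Gperm_def by blast
qed



lemma desc_Aall: "desc a y \<Longrightarrow> y \<in> Aall P le les \<Longrightarrow> a \<in> Aall P le les"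
  by (induction a y rule: desc.induct) (auto simp: Aall_At)

lemma Aall_P: "y \<in> Aall P le les \<Longrightarrow> pr1 y \<in> P"
  by (cases y) (simp add: Aall_At)

lemma chain_les:
  assumes les_refl: "\<forall>p \<in> P. les p p"
    and les_trans: "\<forall>p \<in> P. \<forall>q \<in> P. \<forall>r \<in> P. les p q \<longrightarrow> les q r \<longrightarrow> les p r"
    and le_les: "\<forall>p \<in> P. \<forall>q \<in> P. le p q \<longrightarrow> les p q"
  shows "desc a y \<Longrightarrow> y \<in> Aall P le les \<Longrightarrow> les (pr1 a) (pr1 y)"
proof (induction a y rule: desc.induct)
  case (1 u m s j)
  then have "u = At m s None j" by simp
  then show ?case using les_refl Aall_P[OF 1(2)] by simp
next
  case (2 u m s z j)
  show ?case
  proof (cases "u = At m s (Some z) j")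
    case True
    then show ?thesis using les_refl Aall_P[OF 2(3)] by simp
  next
    case False
    then have d: "desc u z" using 2(2) by simp
    have z: "z \<in> Aall P le les" "s \<in> P" "cnd le les (pr1 z) s j" using 2(3) by (simp_all add: Aall_At)
    have pz: "pr1 z \<in> P" by (rule Aall_P[OF z(1)])
    have a1: "les (pr1 u) (pr1 z)" using 2(1)[OF d z(1)] .
    have a2: "les (pr1 z) s" using z(3) le_les pz z(2) unfolding cnd_def by blast
    have pu: "pr1 u \<in> P" using desc_Aall[OF d z(1)] Aall_P by blast
    have "les (pr1 u) s" using les_trans pu pz z(2) a1 a2 by blast
    then show ?thesis by simp
  qed
qed

lemma chain_le:
  assumes le_refl: "\<forall>p \<in> P. le p p"
    and le_trans: "\<forall>p \<in> P. \<forall>q \<in> P. \<forall>r \<in> P. le p q \<longrightarrow> le q r \<longrightarrow> le p r"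
  shows "desc a y \<Longrightarrow> y \<in> Aall P le les \<Longrightarrow> le (pr1 a) (pr1 y) \<or>
    (\<exists>m s z j. At m s (Some z) j \<in> Aall P le les \<and> desc a z \<and> desc (At m s (Some z) j) y \<and> \<not> le (pr1 z) s)"
proof (induction a y rule: desc.induct)
  case (1 u m s j)
  then have "u = At m s None j" by simp
  then show ?case using le_refl Aall_P[OF 1(2)] by simp
next
  case (2 u m s z j)
  show ?case
  proof (cases "u = At m s (Some z) j")
    case True
    then show ?thesis using le_refl Aall_P[OF 2(3)] by simp
  next
    case False
    then have d: "desc u z" using 2(2) by simp
    have z: "z \<in> Aall P le les" "s \<in> P" using 2(3) by (simp_all add: Aall_At)
    have pz: "pr1 z \<in> P" by (rule Aall_P[OF z(1)])
    have pu: "pr1 u \<in> P" using desc_Aall[OF d z(1)] Aall_P by blast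
    note IH = 2(1)[OF d z(1)]
    show ?thesis
    proof (cases "le (pr1 u) (pr1 z)")
      case True
      show ?thesis
      proof (cases "le (pr1 z) s")
        case True
        then have "le (pr1 u) s" using \<open>le (pr1 u) (pr1 z)\<close> le_trans pu pz z(2) by blast
        then show ?thesis by simp
      next
        case False
        have "desc (At m s (Some z) j) (At m s (Some z) j)" by (rule desc_refl)
        then show ?thesis using 2(3) d False by blast
      qed
    next
      case False
      then obtain m' s' z' j' where w: "At m' s' (Some z') j' \<in> Aall P le les" "desc u z'"
         "desc (At m' s' (Some z') j') z" "\<not> le (pr1 z') s'" using IH by blast
      have "desc (At m' s' (Some z') j') (At m s (Some z) j)" using w(3) by simp
      then show ?thesis using w by blast
    qed
  qed
qed

lemma gp_S: assumes g: "\<pi> \<in> Gperm P le les" shows "\<pi> ` Sset P le les r = Sset P le les r"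
proof -
  have bA: "bij_betw \<pi> (Aall P le les) (Aall P le les)" using g unfolding Gperm_def by auto
  show ?thesis
  proof
    show "\<pi> ` Sset P le les r \<subseteq> Sset P le les r"
      using bA gp_pr[OF g] unfolding Sset_def bij_betw_def by auto
  next
    show "Sset P le les r \<subseteq> \<pi> ` Sset P le les r"
    proof
      fix x assume x: "x \<in> Sset P le les r"
      then obtain x' where x': "x' \<in> Aall P le les" "x = \<pi> x'"
        using bA unfolding Sset_def bij_betw_def by auto
      then have "pr1 x' = r" using gp_pr[OF g x'(1)] x unfolding Sset_def by auto
      then show "x \<in> \<pi> ` Sset P le les r" using x' unfolding Sset_def by auto
    qed
  qed
qed

lemma graph_inv: assumes "\<pi> ` S = S" "\<forall>x\<in>S. \<pi> (h x) = h (\<pi> x)"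
  shows "(\<lambda>(x, y). (\<pi> x, \<pi> y)) ` {(x, h x) | x. x \<in> S} = {(x, h x) | x. x \<in> S}"
proof -
  have e: "{(x, h x) | x. x \<in> S} = (\<lambda>x. (x, h x)) ` S" by auto
  have "(\<lambda>(x, y). (\<pi> x, \<pi> y)) ` ((\<lambda>x. (x, h x)) ` S) = (\<lambda>x. (\<pi> x, \<pi> (h x))) ` S"
    by (auto simp: image_iff)
  also have "\<dots> = (\<lambda>x. (\<pi> x, h (\<pi> x))) ` S" using assms(2) by (auto simp: image_iff)
  also have "\<dots> = (\<lambda>x. (x, h x)) ` (\<pi> ` S)" by (auto simp: image_iff)
  finally show ?thesis using e assms(1) by simp
qed

lemma fresh_root: assumes "finite B" "finite K"
  shows "\<exists>k::nat. k \<notin> K \<and> (\<forall>b\<in>B. \<not> desc (At 0 p None k) b)"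
proof -
  have "finite (K \<union> pr3 ` root ` B)" using assms by simp
  then obtain k where k: "k \<notin> K \<union> pr3 ` root ` B"
    by (metis ex_new_if_finite infinite_UNIV_nat)
  have "\<not> desc (At 0 p None k) b" if "b \<in> B" for b
  proof
    assume "desc (At 0 p None k) b"
    then have "At 0 p None k = root b" using desc_root by fastforce
    then have "k = pr3 (root b)" by (metis pr3.simps)
    then show False using k that by auto
  qed
  then show ?thesis using k by auto
qed



lemma in_V_graph: assumes "\<And>\<pi>. \<pi> \<in> Gperm P le les \<Longrightarrow> \<pi> ` S = S \<and> (\<forall>x\<in>S. \<pi> (h x) = h (\<pi> x))"
  shows "in_V_rel P le les {(x, h x) | x. x \<in> S}"
  unfolding in_V_rel_def
proof (intro exI[of _ "{}"] conjI ballI impI)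
  fix \<pi> assume g: "\<pi> \<in> Gperm P le les"
  show "(\<lambda>(x, y). (\<pi> x, \<pi> y)) ` {(x, h x) | x. x \<in> S} = {(x, h x) | x. x \<in> S}"
    using assms[OF g] graph_inv[of \<pi> S h] by blast
qed auto

lemma dir1:
  assumes p: "p \<in> P" and q: "q \<in> P" and pq: "le p q"
  shows "V_le P le les p q"
proof (cases "p = q")
  case True
  have "in_V_rel P le les {(x, id x) | x. x \<in> Sset P le les p}"
  proof (rule in_V_graph)
    fix \<pi> assume g: "\<pi> \<in> Gperm P le les"
    show "\<pi> ` Sset P le les p = Sset P le les p \<and> (\<forall>x\<in>Sset P le les p. \<pi> (id x) = id (\<pi> x))"
      using gp_S[OF g] by simp
  qed
  then show ?thesis unfolding V_le_def True by (intro exI[of _ id]) auto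
next
  case False
  define f where "f a = At (Suc (pr0 a)) q (Some a) 0" for a :: "'a atom"
  have inj: "inj_on f (Sset P le les p)" unfolding f_def inj_on_def by auto
  have into: "f ` Sset P le les p \<subseteq> Sset P le les q"
    using q pq False unfolding f_def Sset_def by (auto simp: Aall_At cnd_def)
  have "in_V_rel P le les {(x, f x) | x. x \<in> Sset P le les p}"
  proof (rule in_V_graph)
    fix \<pi> assume g: "\<pi> \<in> Gperm P le les"
    have "\<pi> (f a) = f (\<pi> a)" if a: "a \<in> Sset P le les p" for a
    proof -
      have aA: "a \<in> Aall P le les" "pr1 a = p" using a unfolding Sset_def by auto
      have fa: "f a \<in> Aall P le les" using into a unfolding Sset_def by auto
      have pa: "pr0 (\<pi> a) = pr0 a" "pr1 (\<pi> a) = p" using gp_pr[OF g aA(1)] aA by auto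
      have pf: "pr0 (\<pi> (f a)) = Suc (pr0 a)" "pr1 (\<pi> (f a)) = q" "pr2 (\<pi> (f a)) = Some (\<pi> a)"
        using gp_pr[OF g fa] unfolding f_def by auto
      have "\<pi> (f a) \<in> Aall P le les" using g fa unfolding Gperm_def bij_betw_def by auto
      then have "At (pr0 (\<pi> (f a))) (pr1 (\<pi> (f a))) (pr2 (\<pi> (f a))) (pr3 (\<pi> (f a))) \<in> Aall P le les"
        using atom_eta by metis
      then have "cnd le les p q (pr3 (\<pi> (f a)))" using pf pa by (simp add: Aall_At)
      then have "pr3 (\<pi> (f a)) = 0" using pq unfolding cnd_def by auto
      then show ?thesis using pf pa atom_eta[of "\<pi> (f a)"] unfolding f_def by simp
    qed
    then show "\<pi> ` Sset P le les p = Sset P le les p \<and> (\<forall>x\<in>Sset P le les p. \<pi> (f x) = f (\<pi> x))"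
      using gp_S[OF g] by auto
  qed
  then show ?thesis unfolding V_le_def using inj into by blast
qed

lemma dir3:
  assumes p: "p \<in> P" and q: "q \<in> P" and pq: "les p q"
  shows "V_le_star P le les p q"
proof (cases "p = q")
  case True
  have "in_V_rel P le les {(x, id x) | x. x \<in> Sset P le les p}"
  proof (rule in_V_graph)
    fix \<pi> assume g: "\<pi> \<in> Gperm P le les"
    show "\<pi> ` Sset P le les p = Sset P le les p \<and> (\<forall>x\<in>Sset P le les p. \<pi> (id x) = id (\<pi> x))"
      using gp_S[OF g] by simp
  qed
  then show ?thesis unfolding V_le_star_def True by (intro exI[of _ "Sset P le les q"] exI[of _ id]) auto
next
  case False
  define D where "D = {y \<in> Aall P le les. pr1 y = q \<and> pr2 y \<noteq> None \<and> pr1 (the (pr2 y)) = p}"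
  define g where "g y = the (pr2 y)" for y :: "'a atom"
  have DS: "D \<subseteq> Sset P le les q" unfolding D_def Sset_def by auto
  have gD: "g ` D = Sset P le les p"
  proof
    show "g ` D \<subseteq> Sset P le les p"
    proof
      fix x assume "x \<in> g ` D"
      then obtain y where y: "y \<in> D" "x = g y" by auto
      then obtain z where z: "pr2 y = Some z" unfolding D_def by auto
      have "y \<in> Aall P le les" using y unfolding D_def by auto
      then have "At (pr0 y) (pr1 y) (pr2 y) (pr3 y) \<in> Aall P le les" using atom_eta by metis
      then have "z \<in> Aall P le les" using z by (simp add: Aall_At)
      then show "x \<in> Sset P le les p" using y z unfolding D_def g_def Sset_def by auto
    qed
  next
    show "Sset P le les p \<subseteq> g ` D"
    proof
      fix a assume a: "a \<in> Sset P le les p"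
      have c: "cnd le les p q 0" using pq False unfolding cnd_def by auto
      have "At (Suc (pr0 a)) q (Some a) 0 \<in> D"
        using a c q unfolding D_def Sset_def by (auto simp: Aall_At)
      moreover have "g (At (Suc (pr0 a)) q (Some a) 0) = a" unfolding g_def by simp
      ultimately show "a \<in> g ` D" by (metis imageI)
    qed
  qed
  have "in_V_rel P le les {(x, g x) | x. x \<in> D}"
  proof (rule in_V_graph)
    fix \<pi> assume gp: "\<pi> \<in> Gperm P le les"
    have bA: "bij_betw \<pi> (Aall P le les) (Aall P le les)" using gp unfolding Gperm_def by auto
    have sub: "z \<in> Aall P le les" if "y \<in> Aall P le les" "pr2 y = Some z" for y z
    proof -
      have "At (pr0 y) (pr1 y) (pr2 y) (pr3 y) \<in> Aall P le les" using that atom_eta by metis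
      then show ?thesis using that by (simp add: Aall_At)
    qed
    have comm: "\<pi> (g y) = g (\<pi> y)" if "y \<in> D" for y
      using that gp_pr[OF gp, of y] unfolding D_def g_def by auto
    have "\<pi> ` D \<subseteq> D"
    proof
      fix x assume "x \<in> \<pi> ` D"
      then obtain y where y: "y \<in> D" "x = \<pi> y" by auto
      then obtain z where z: "pr2 y = Some z" unfolding D_def by auto
      have yA: "y \<in> Aall P le les" using y unfolding D_def by auto
      have zA: "z \<in> Aall P le les" using sub[OF yA z] .
      have "\<pi> y \<in> Aall P le les" using bA yA unfolding bij_betw_def by auto
      then show "x \<in> D" using y z gp_pr[OF gp yA] gp_pr[OF gp zA] unfolding D_def by auto
    qed
    moreover have "D \<subseteq> \<pi> ` D"
    proof
      fix x assume x: "x \<in> D"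
      then obtain y where y: "y \<in> Aall P le les" "x = \<pi> y"
        using bA unfolding D_def bij_betw_def by auto
      obtain z where z: "pr2 x = Some z" using x unfolding D_def by auto
      obtain z' where z': "pr2 y = Some z'" "\<pi> z' = z" using gp_pr[OF gp y(1)] y z by auto
      have zA: "z' \<in> Aall P le les" using sub[OF y(1) z'(1)] .
      have "y \<in> D" using x y z z' gp_pr[OF gp y(1)] gp_pr[OF gp zA] unfolding D_def by auto
      then show "x \<in> \<pi> ` D" using y by auto
    qed
    ultimately show "\<pi> ` D = D \<and> (\<forall>x\<in>D. \<pi> (g x) = g (\<pi> x))" using comm by auto
  qed
  then show ?thesis unfolding V_le_star_def using DS gD by blast
qed



lemma get_V: assumes "in_V_rel P le les R"
  obtains B where "finite B" "\<And>\<pi>. \<pi> \<in> Gperm P le les \<Longrightarrow> (\<forall>b\<in>B. \<pi> b = b) \<Longrightarrow> (\<lambda>(x, y). (\<pi> x, \<pi> y)) ` R = R"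
proof -
  obtain B where B: "finite B \<and> B \<subseteq> Aall P le les \<and>
     (\<forall>\<pi> \<in> Gperm P le les. (\<forall>b \<in> B. \<pi> b = b) \<longrightarrow> (\<lambda>(x, y). (\<pi> x, \<pi> y)) ` R = R)"
    using assms[unfolded in_V_rel_def] by (rule exE)
  show ?thesis
  proof (rule that)
    show "finite B" using B by (rule conjunct1)
    fix \<pi> assume "\<pi> \<in> Gperm P le les" "\<forall>b\<in>B. \<pi> b = b"
    then show "(\<lambda>(x, y). (\<pi> x, \<pi> y)) ` R = R" using B by simp
  qed
qed

lemma img_mem: assumes "(x, y) \<in> R" "(\<lambda>(x, y). (\<pi> x, \<pi> y)) ` R = R" shows "(\<pi> x, \<pi> y) \<in> R"
proof -
  have "(\<lambda>(x, y). (\<pi> x, \<pi> y)) (x, y) \<in> (\<lambda>(x, y). (\<pi> x, \<pi> y)) ` R" using assms(1) by (rule imageI)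
  then show ?thesis using assms(2) by simp
qed

lemma root_swap:
  assumes p: "p \<in> P" and B: "finite B" and nd: "\<forall>b\<in>B. \<not> desc (At 0 p None k) b"
    and y: "\<not> desc (At 0 p None k) y"
  obtains k' where "k' \<noteq> k" "sw (At 0 p None k) (At 0 p None k') \<in> Gperm P le les"
    "\<forall>b\<in>B. sw (At 0 p None k) (At 0 p None k') b = b"
    "sw (At 0 p None k) (At 0 p None k') y = y"
    "sw (At 0 p None k) (At 0 p None k') (At 0 p None k) = At 0 p None k'"
    "At 0 p None k' \<in> Sset P le les p"
proof -
  obtain k' where k': "k' \<notin> {k}" "\<forall>b\<in>insert y B. \<not> desc (At 0 p None k') b"
    using fresh_root[of "insert y B" "{k}" p] B by auto
  let ?a = "At 0 p None k" and ?a' = "At 0 p None k'"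
  have tw: "twin ?a ?a'" using k' unfolding twin_def by auto
  have aA: "?a \<in> Aall P le les" "?a' \<in> Aall P le les" using p by (auto simp: Aall_At)
  show ?thesis
  proof (rule that)
    show "k' \<noteq> k" using k' by simp
    show "sw ?a ?a' \<in> Gperm P le les" using sw_Gperm[OF tw aA] .
    show "\<forall>b\<in>B. sw ?a ?a' b = b" using nd k'(2) by (simp add: sw_nodesc)
    show "sw ?a ?a' y = y" using y k'(2) by (simp add: sw_nodesc)
    show "sw ?a ?a' ?a = ?a'" by (subst sw.simps) (rule if_P[OF refl])
    show "?a' \<in> Sset P le les p" using aA unfolding Sset_def by simp
  qed
qed

lemma dir2:
  assumes le_refl: "\<forall>p \<in> P. le p p"
    and le_trans: "\<forall>p \<in> P. \<forall>q \<in> P. \<forall>r \<in> P. le p q \<longrightarrow> le q r \<longrightarrow> le p r"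
    and p: "p \<in> P" and q: "q \<in> P" and V: "V_le P le les p q"
  shows "le p q"
proof (rule ccontr)
  assume npq: "\<not> le p q"
  obtain f where inj: "inj_on f (Sset P le les p)" and into: "f ` Sset P le les p \<subseteq> Sset P le les q"
    and iv: "in_V_rel P le les {(x, f x) | x. x \<in> Sset P le les p}" using V unfolding V_le_def by blast
  let ?R = "{(x, f x) | x. x \<in> Sset P le les p}"
  obtain B where B: "finite B" and Binv: "\<And>\<pi>. \<pi> \<in> Gperm P le les \<Longrightarrow> (\<forall>b\<in>B. \<pi> b = b) \<Longrightarrow> (\<lambda>(x, y). (\<pi> x, \<pi> y)) ` ?R = ?R"
    using get_V[OF iv] by blast
  obtain k where k: "\<forall>b\<in>B. \<not> desc (At 0 p None k) b" using fresh_root[OF B, of "{}" p] by auto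
  define a where "a = At 0 p None k"
  have aS: "a \<in> Sset P le les p" using p unfolding a_def Sset_def by (simp add: Aall_At)
  define y where "y = f a"
  have yS: "y \<in> Sset P le les q" using into aS y_def by auto
  have yA: "y \<in> Aall P le les" "pr1 y = q" using yS unfolding Sset_def by auto
  have aR: "(a, y) \<in> ?R" using aS y_def by auto
  show False
  proof (cases "desc a y")
    case False
    have nd': "\<not> desc (At 0 p None k) y" using False a_def by simp
    obtain k' where k0: "k' \<noteq> k" "sw (At 0 p None k) (At 0 p None k') \<in> Gperm P le les"
      "\<forall>b\<in>B. sw (At 0 p None k) (At 0 p None k') b = b" "sw (At 0 p None k) (At 0 p None k') y = y"
      "sw (At 0 p None k) (At 0 p None k') (At 0 p None k) = At 0 p None k'" "At 0 p None k' \<in> Sset P le les p"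
      by (rule root_swap[OF p B k nd'])
    note k' = k0[folded a_def]
    have "(At 0 p None k', y) \<in> ?R" using img_mem[OF aR Binv[OF k'(2,3)]] k'(4,5) by simp
    then have "f (At 0 p None k') = f a" using y_def by auto
    then have "At 0 p None k' = a" using inj k'(6) aS by (auto simp: inj_on_def)
    then show False using k'(1) a_def by simp
  next
    case True
    have "le (pr1 a) (pr1 y) \<or>
    (\<exists>m s z j. At m s (Some z) j \<in> Aall P le les \<and> desc a z \<and> desc (At m s (Some z) j) y \<and> \<not> le (pr1 z) s)"
      using chain_le[OF le_refl le_trans True yA(1)] .
    moreover have "pr1 a = p" unfolding a_def by simp
    ultimately obtain m s z j where w: "At m s (Some z) j \<in> Aall P le les" "desc a z"
      "desc (At m s (Some z) j) y" "\<not> le (pr1 z) s" using npq yA by auto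
    define u where "u = At m s (Some z) j"
    define v where "v = At m s (Some z) (Suc j)"
    have tw: "twin u v" unfolding u_def v_def twin_def by simp
    have vA: "v \<in> Aall P le les" using w(1,4) unfolding v_def by (simp add: Aall_At cnd_def)
    have uA: "u \<in> Aall P le les" using w(1) u_def by simp
    define \<pi> where "\<pi> = sw u v"
    have g: "\<pi> \<in> Gperm P le les" using sw_Gperm[OF tw uA vA] \<pi>_def by simp
    have au: "desc a u" "desc a v" using w(2) unfolding u_def v_def by simp_all
    have fixB: "\<forall>b\<in>B. \<pi> b = b"
    proof
      fix b assume b: "b \<in> B"
      have "\<not> desc u b" using desc_trans[OF au(1)] k b a_def by blast
      moreover have "\<not> desc v b" using desc_trans[OF au(2)] k b a_def by blast
      ultimately show "\<pi> b = b" using sw_nodesc \<pi>_def by metis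
    qed
    have "depth a \<le> depth z" using desc_depth[OF w(2)] .
    then have "\<not> desc u a" "\<not> desc v a" using desc_depth[of u a] desc_depth[of v a] unfolding u_def v_def by auto
    then have pa: "\<pi> a = a" using sw_nodesc \<pi>_def by metis
    have py: "\<pi> y \<noteq> y" using sw_desc[OF tw] w(3) \<pi>_def u_def by metis
    have "(a, \<pi> y) \<in> ?R" using img_mem[OF aR Binv[OF g fixB]] pa by simp
    then have "\<pi> y = f a" by auto
    then show False using py y_def by simp
  qed
qed

lemma dir4:
  assumes les_refl: "\<forall>p \<in> P. les p p"
    and les_trans: "\<forall>p \<in> P. \<forall>q \<in> P. \<forall>r \<in> P. les p q \<longrightarrow> les q r \<longrightarrow> les p r"
    and le_les: "\<forall>p \<in> P. \<forall>q \<in> P. le p q \<longrightarrow> les p q"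
    and p: "p \<in> P" and q: "q \<in> P" and V: "V_le_star P le les p q"
  shows "les p q"
proof (rule ccontr)
  assume npq: "\<not> les p q"
  obtain D g where DS: "D \<subseteq> Sset P le les q" and gD: "g ` D = Sset P le les p"
    and iv: "in_V_rel P le les {(y, g y) | y. y \<in> D}" using V unfolding V_le_star_def by blast
  let ?R = "{(y, g y) | y. y \<in> D}"
  obtain B where B: "finite B" and Binv: "\<And>\<pi>. \<pi> \<in> Gperm P le les \<Longrightarrow> (\<forall>b\<in>B. \<pi> b = b) \<Longrightarrow> (\<lambda>(x, y). (\<pi> x, \<pi> y)) ` ?R = ?R"
    using get_V[OF iv] by blast
  obtain k where k: "\<forall>b\<in>B. \<not> desc (At 0 p None k) b" using fresh_root[OF B, of "{}" p] by auto
  define a where "a = At 0 p None k"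
  have aS: "a \<in> Sset P le les p" using p unfolding a_def Sset_def by (simp add: Aall_At)
  then obtain y where y: "y \<in> D" "g y = a" using gD by (metis imageE)
  have yA: "y \<in> Aall P le les" "pr1 y = q" using y DS unfolding Sset_def by auto
  have aR: "(y, a) \<in> ?R" using y by auto
  have nd: "\<not> desc a y"
  proof
    assume "desc a y"
    then have "les (pr1 a) (pr1 y)" using chain_les[OF les_refl les_trans le_les] yA by blast
    then show False using npq yA a_def by simp
  qed
  have nd': "\<not> desc (At 0 p None k) y" using nd a_def by simp
    obtain k' where k0: "k' \<noteq> k" "sw (At 0 p None k) (At 0 p None k') \<in> Gperm P le les"
      "\<forall>b\<in>B. sw (At 0 p None k) (At 0 p None k') b = b" "sw (At 0 p None k) (At 0 p None k') y = y"
      "sw (At 0 p None k) (At 0 p None k') (At 0 p None k) = At 0 p None k'" "At 0 p None k' \<in> Sset P le les p"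
      by (rule root_swap[OF p B k nd'])
    note k' = k0[folded a_def]
  have "(y, At 0 p None k') \<in> ?R" using img_mem[OF aR Binv[OF k'(2,3)]] k'(4,5) by simp
  then have "At 0 p None k' = a" using y by auto
  then show False using k'(1) a_def by simp
qed


theorem theorem2p7:
  fixes P :: "'p set" and le les :: "'p \<Rightarrow> 'p \<Rightarrow> bool"
  assumes le_refl: "\<forall>p \<in> P. le p p"
    and le_trans: "\<forall>p \<in> P. \<forall>q \<in> P. \<forall>r \<in> P. le p q \<longrightarrow> le q r \<longrightarrow> le p r"
    and le_antisym: "\<forall>p \<in> P. \<forall>q \<in> P. le p q \<longrightarrow> le q p \<longrightarrow> p = q"
    and les_refl: "\<forall>p \<in> P. les p p"
    and les_trans: "\<forall>p \<in> P. \<forall>q \<in> P. \<forall>r \<in> P. les p q \<longrightarrow> les q r \<longrightarrow> les p r"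
    and le_les: "\<forall>p \<in> P. \<forall>q \<in> P. le p q \<longrightarrow> les p q"
  shows "\<forall>p \<in> P. \<forall>q \<in> P.
           (le p q \<longleftrightarrow> V_le P le les p q) \<and> (les p q \<longleftrightarrow> V_le_star P le les p q)"
proof (intro ballI conjI iffI)
  fix p q assume p: "p \<in> P" and q: "q \<in> P"
  show "le p q \<Longrightarrow> V_le P le les p q" using dir1[OF p q] .
  show "V_le P le les p q \<Longrightarrow> le p q" using dir2[OF le_refl le_trans p q] .
  show "les p q \<Longrightarrow> V_le_star P le les p q" using dir3[OF p q] .
  show "V_le_star P le les p q \<Longrightarrow> les p q" using dir4[OF les_refl les_trans le_les p q] .
qed

end
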